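(* Let $\alpha\in(0,1)$, $a_1,a_2\in\mathbb{R}$, and let $A$ be the $N\times N$ matrix defined below with $a_0=-a_2$. Let $\Omega_\alpha$ be the bounded open region enclosed by the curve $\beta(t)=1+e^{it}(1-e^{-it})^{\alpha}$, $0\le t\le 2\pi$, and let $R_N$ be the set of $(a_1,a_2)\in\mathbb{R}^2$ such that every eigenvalue of $A$ lies in $\Omega_\alpha$ (the stable region of the zero solution). For $j$ with $\sin(2\pi j/N)\neq 0$ let $\gamma_j$ be the closed curve in the $a_1a_2$-plane $$\gamma_j(t)=\left(\mathrm{Re}\!\left[e^{it}(1-e^{-it})^{\alpha}\right]+1,\ \frac{1}{2\sin(2\pi j/N)}\,\mathrm{Im}\!\left[e^{it}(1-e^{-it})^{\alpha}\right]\right),\quad 0\le t\le 2\pi .$$ Then: (i) if $N=1$ or $N=2$, $R_N=\{(a_1,a_2): 1-2^{\alpha}<a_1<1\}$; (ii) if $N\ge 3$ is odd, $R_N$ is the region bounded by the line $a_1=1$ and the curve $\gamma_{j^*}$ with $j^*=\lceil (N-1)/4\rceil$, i.e. the set of points with $a_1<1$ lying inside $\gamma_{j^*}$; (iii) if $N\ge 4$ is even, $R_N$ is the region bounded by the line $a_1=1$ and the curve $\gamma_{j^*}$ with $j^*=\lfloor N/4\rfloor$, i.e. the set of points with $a_1<1$ lying inside $\gamma_{j^*}$.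
   Context: Fractional-order linear coupled map lattice: for $\alpha\in(0,1)$, $X_{t+1}=X_0+\sum_{j=0}^{t}\frac{\Gamma(t-j+\alpha)}{\Gamma(\alpha)\Gamma(t-j+1)}(A-I)X_j$, $X_t\in\mathbb{R}^N$. Connectivity matrix for $N\ge 3$: $A$ is the $N\times N$ circulant matrix with $A_{k,k}=a_1$, $A_{k,k+1}=a_2$, $A_{k,k-1}=a_0$ (indices modulo $N$, periodic boundary conditions), all other entries $0$; for $N=2$, $A=\begin{pmatrix}a_1&a_0+a_2\\ a_0+a_2&a_1\end{pmatrix}$; for $N=1$, $A=(a_0+a_1+a_2)$. Powers $(1-e^{-it})^\alpha$ use the principal branch. By the stability criterion, the zero solution is asymptotically stable exactly when every eigenvalue of $A$ lies in $\Omega_\alpha$; a real number lies in $\Omega_\alpha$ iff it lies in $(1-2^{\alpha},1)$. $\lceil\cdot\rceil$ and $\lfloor\cdot\rfloor$ denote ceiling and integer part. *)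

theory Defs
  imports "HOL-Analysis.Analysis"
begin

text \<open>Square N x N matrices are represented as functions nat => nat => real,
  indices ranging over 0..N-1.\<close>

definition cml_matrix :: "nat \<Rightarrow> real \<Rightarrow> real \<Rightarrow> real \<Rightarrow> nat \<Rightarrow> nat \<Rightarrow> real" where
  "cml_matrix N a0 a1 a2 = (\<lambda>i j.
     if N = 1 then a0 + a1 + a2
     else if N = 2 then (if i = j then a1 else a0 + a2)
     else (if i = j then a1
           else if j = (i + 1) mod N then a2
           else if i = (j + 1) mod N then a0
           else 0))"

definition is_eigenvalue :: "nat \<Rightarrow> (nat \<Rightarrow> nat \<Rightarrow> real) \<Rightarrow> complex \<Rightarrow> bool" where
  "is_eigenvalue N M \<mu> \<longleftrightarrow>
     (\<exists>v :: nat \<Rightarrow> complex. (\<exists>i<N. v i \<noteq> 0) \<and>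
        (\<forall>i<N. (\<Sum>k<N. complex_of_real (M i k) * v k) = \<mu> * v i))"

text \<open>The curve beta, reparametrised from [0,2pi] to [0,1]; powr is the principal branch.\<close>
definition beta_curve :: "real \<Rightarrow> real \<Rightarrow> complex" where
  "beta_curve \<alpha> s = 1 + cis (2 * pi * s) * ((1 - cis (- (2 * pi * s))) powr (complex_of_real \<alpha>))"

definition Omega :: "real \<Rightarrow> complex set" where
  "Omega \<alpha> = inside (path_image (beta_curve \<alpha>))"

definition stable_region :: "real \<Rightarrow> nat \<Rightarrow> (real \<times> real) set" where
  "stable_region \<alpha> N = {(a1, a2). \<forall>\<mu>. is_eigenvalue N (cml_matrix N (-a2) a1 a2) \<mu> \<longrightarrow> \<mu> \<in> Omega \<alpha>}"

text \<open>The curve gamma_j in the (a1,a2)-plane, reparametrised from [0,2pi] to [0,1].\<close>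
definition gamma_curve :: "real \<Rightarrow> nat \<Rightarrow> nat \<Rightarrow> real \<Rightarrow> real \<times> real" where
  "gamma_curve \<alpha> N j s =
     (let w = cis (2 * pi * s) * ((1 - cis (- (2 * pi * s))) powr (complex_of_real \<alpha>)) in
      (Re w + 1, Im w / (2 * sin (2*pi*real j / real N))))"

end

theory Submission
  imports Defs
begin



lemma one_minus_cis: "1 - cis (- t) = complex_of_real (2 * sin (t/2)) * cis ((pi - t)/2)"
proof -
  have "sin t = 2 * sin (t/2) * cos (t/2)" using sin_double[of "t/2"] by simp
  moreover have "cos t = 1 - 2 * (sin (t/2))^2" using cos_double_sin[of "t/2"] by simp
  moreover have "cos ((pi - t)/2) = sin (t/2)" "sin ((pi - t)/2) = cos (t/2)"
    using cos_diff[of "pi/2" "t/2"] sin_diff[of "pi/2" "t/2"] by (simp_all add: diff_divide_distrib)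
  ultimately show ?thesis
    by (simp add: complex_eq_iff power2_eq_square algebra_simps)
qed

lemma powr_polar:
  assumes "r > 0" "-pi < phi" "phi \<le> pi"
  shows "(complex_of_real r * cis phi) powr complex_of_real a = complex_of_real (r powr a) * cis (a * phi)"
proof -
  have e: "complex_of_real r * cis phi = exp (Complex (ln r) phi)"
    using assms by (simp add: exp_eq_polar)
  have "Ln (exp (Complex (ln r) phi)) = Complex (ln r) phi" using assms by (intro Ln_exp) auto
  then have "(complex_of_real r * cis phi) powr complex_of_real a = exp (complex_of_real a * Complex (ln r) phi)"
    using assms by (simp add: powr_def e)
  also have "\<dots> = complex_of_real (r powr a) * cis (a * phi)"
    using assms by (simp add: exp_eq_polar powr_def)
  finally show ?thesis .
qed

lemma beta_formula:
  assumes "0 < t" "t < 2*pi"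
  shows "1 + cis t * (1 - cis (- t)) powr complex_of_real a
       = 1 - complex_of_real ((2 * sin (t/2)) powr a) * cis ((t - pi) * (1 - a/2))"
proof -
  have s: "sin (t/2) > 0" using assms by (intro sin_gt_zero) auto
  have P: "(1 - cis (- t)) powr complex_of_real a = complex_of_real ((2 * sin (t/2)) powr a) * cis (a * ((pi - t)/2))"
    unfolding one_minus_cis using s assms by (intro powr_polar) auto
  have cc: "cis t * cis (a * ((pi - t)/2)) = - cis ((t - pi) * (1 - a/2))"
  proof -
    have "cis t * cis (a * ((pi - t)/2)) = cis ((t - pi) * (1 - a/2) + pi)"
      by (simp add: cis_mult) (rule arg_cong[where f=cis], simp add: algebra_simps diff_divide_distrib add_divide_distrib)
    also have "\<dots> = - cis ((t - pi) * (1 - a/2))" by (simp add: cis_def complex_eq_iff)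
    finally show ?thesis .
  qed
  have "cis t * (1 - cis (- t)) powr complex_of_real a = cis t * (complex_of_real ((2 * sin (t/2)) powr a) * cis (a * ((pi - t)/2)))"
    by (simp only: P)
  also have "\<dots> = complex_of_real ((2 * sin (t/2)) powr a) * (cis t * cis (a * ((pi - t)/2)))"
    by (rule mult.left_commute)
  also have "\<dots> = complex_of_real ((2 * sin (t/2)) powr a) * (- cis ((t - pi) * (1 - a/2)))" by (simp only: cc)
  finally show ?thesis by simp
qed

definition HH :: "real \<Rightarrow> real \<Rightarrow> real" where
  "HH a \<theta> = (max 0 (2 * cos (\<theta> / (2 - a)))) powr a"

definition th :: "complex \<Rightarrow> real" where
  "th z = arccos (Re (1 - z) / cmod (1 - z))"

definition SS :: "real \<Rightarrow> complex set" where
  "SS a = {z. z \<noteq> 1 \<and> cmod (1 - z) < HH a (th z)}"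

definition EE :: "real \<Rightarrow> complex set" where
  "EE a = {z. z \<noteq> 1 \<and> cmod (1 - z) > HH a (th z)}"

lemma th_polar:
  assumes "r > 0" "\<bar>psi\<bar> \<le> pi"
  shows "th (1 - complex_of_real r * cis psi) = \<bar>psi\<bar>"
proof -
  have "cmod (complex_of_real r * cis psi) = r" using assms by (simp add: norm_mult)
  then have "Re (1 - (1 - complex_of_real r * cis psi)) / cmod (1 - (1 - complex_of_real r * cis psi)) = cos psi"
    using assms by simp
  then show ?thesis unfolding th_def using arccos_cos_eq_abs[OF assms(2)] by simp
qed

lemma polar_rep:
  assumes "z \<noteq> 1"
  shows "z = 1 - complex_of_real (cmod (1 - z)) * cis (Arg (1 - z))"
    and "th z = \<bar>Arg (1 - z)\<bar>" and "cmod (1 - z) > 0"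
proof -
  have e: "complex_of_real (cmod (1 - z)) * cis (Arg (1 - z)) = 1 - z"
    using rcis_cmod_Arg[of "1 - z"] by (simp add: rcis_def)
  then show "z = 1 - complex_of_real (cmod (1 - z)) * cis (Arg (1 - z))" by simp
  show "cmod (1 - z) > 0" using assms by simp
  have "\<bar>Arg (1 - z)\<bar> \<le> pi" using Arg_bounded[of "1 - z"] by auto
  then show "th z = \<bar>Arg (1 - z)\<bar>"
    using th_polar[of "cmod (1 - z)" "Arg (1 - z)"] assms e by simp
qed

lemma HH_nonneg: "HH a t \<ge> 0"
  by (simp add: HH_def)

lemma HH_le: assumes "0 < a" shows "HH a t \<le> 2 powr a"
  unfolding HH_def using assms by (intro powr_mono2) auto

lemma HH_cont: assumes "0 < a" "a < 1" shows "continuous_on UNIV (HH a)"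
  unfolding HH_def using assms
  by (intro continuous_on_powr' continuous_intros) auto

lemma HH_pos_imp:
  assumes "0 < a" "a < 1" "0 \<le> t" "t \<le> pi" "HH a t > 0"
  shows "t < pi * (1 - a/2)"
proof (rule ccontr)
  assume na: "\<not> t < pi * (1 - a/2)"
  have pa: "pi * a \<le> pi * 1" using assms by (intro mult_left_mono) auto
  have "pi * (2 - a) = 2 * pi - pi * a" by (simp add: algebra_simps)
  then have "t \<le> pi * (2 - a)" using assms pa by linarith
  then have "t / (2 - a) \<le> pi" using assms by (simp add: divide_le_eq)
  moreover have "pi/2 \<le> t / (2 - a)" using assms na by (simp add: field_simps)
  ultimately have "cos (t / (2 - a)) \<le> 0"
    using cos_monotone_0_pi_le[of "pi/2" "t/(2-a)"] by simp
  then have "HH a t = 0" by (simp add: HH_def max_def)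
  with assms show False by simp
qed

lemma HH_formula:
  assumes "0 < a" "a < 1" "\<bar>psi\<bar> < pi * (1 - a/2)"
  shows "HH a \<bar>psi\<bar> = (2 * cos (psi / (2 - a))) powr a" and "HH a \<bar>psi\<bar> > 0"
proof -
  have "\<bar>psi\<bar> / (2 - a) < pi / 2" using assms by (simp add: field_simps)
  moreover have "\<bar>psi / (2 - a)\<bar> = \<bar>psi\<bar> / (2 - a)"
    using assms abs_of_pos[of "2 - a"] by (simp add: abs_divide)
  ultimately have "\<bar>psi / (2 - a)\<bar> < pi / 2" by linarith
  then have "- (pi/2) < psi / (2 - a)" "psi / (2 - a) < pi/2" by linarith+
  then have c: "cos (psi / (2 - a)) > 0" by (intro cos_gt_zero_pi)
  have "cos (\<bar>psi\<bar> / (2 - a)) = cos (psi / (2 - a))"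
    by (cases "psi \<ge> 0") (simp_all add: abs_if)
  then show "HH a \<bar>psi\<bar> = (2 * cos (psi / (2 - a))) powr a" using c by (simp add: HH_def)
  then show "HH a \<bar>psi\<bar> > 0" using c by simp
qed

lemma HH_antimono:
  assumes "0 < a" "a < 1" "0 \<le> t1" "t1 \<le> t2" "t2 \<le> pi"
  shows "HH a t2 \<le> HH a t1"
proof -
  have pa: "pi * a \<le> pi * 1" using assms by (intro mult_left_mono) auto
  have "pi * (2 - a) = 2 * pi - pi * a" by (simp add: algebra_simps)
  then have "t2 \<le> pi * (2 - a)" using assms pa by linarith
  then have "t2 / (2 - a) \<le> pi" using assms by (simp add: divide_le_eq)
  moreover have "t1 / (2 - a) \<le> t2 / (2 - a)" using assms by (simp add: divide_right_mono)
  moreover have "0 \<le> t1 / (2 - a)" using assms by simp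
  ultimately have "cos (t2 / (2 - a)) \<le> cos (t1 / (2 - a))"
    by (intro cos_monotone_0_pi_le)
  then show ?thesis unfolding HH_def using assms
    by (intro powr_mono2) auto
qed

lemma HH_pi: assumes "0 < a" "a < 1" shows "HH a pi = 0"
proof -
  have "cos (pi / (2 - a)) < 0" using assms
    by (intro cos_lt_zero_pi) (auto simp: field_simps)
  then show ?thesis by (simp add: HH_def max_def)
qed

lemma HH_0: "HH a 0 = 2 powr a"
  by (simp add: HH_def)


lemma beta_at:
  assumes "0 < s" "s < 1"
  shows "beta_curve a s = 1 - complex_of_real ((2 * sin (pi * s)) powr a) * cis ((2 * pi * s - pi) * (1 - a/2))"
  using beta_formula[of "2 * pi * s" a] assms unfolding beta_curve_def by simp

lemma beta_0: "beta_curve a 0 = 1" by (simp add: beta_curve_def)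
lemma beta_1: "beta_curve a 1 = 1"
proof -
  have "cis (- (2 * pi)) = 1" by (simp add: complex_eq_iff)
  then show ?thesis by (simp add: beta_curve_def)
qed

lemma path_image_beta:
  assumes "0 < a" "a < 1"
  shows "path_image (beta_curve a) = insert 1 {z. z \<noteq> 1 \<and> cmod (1 - z) = HH a (th z)}"
proof (rule set_eqI, rule iffI)
  fix z assume "z \<in> path_image (beta_curve a)"
  then obtain s where s: "0 \<le> s" "s \<le> 1" "z = beta_curve a s" unfolding path_image_def by auto
  show "z \<in> insert 1 {z. z \<noteq> 1 \<and> cmod (1 - z) = HH a (th z)}"
  proof (cases "s = 0 \<or> s = 1")
    case True then show ?thesis using s beta_0 beta_1 by auto
  next
    case False
    then have s01: "0 < s" "s < 1" using s by auto
    define psi where "psi = (2 * pi * s - pi) * (1 - a/2)"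
    define R where "R = (2 * sin (pi * s)) powr a"
    have sp: "sin (pi * s) > 0" using s01 by (intro sin_gt_zero) auto
    have Rp: "R > 0" unfolding R_def using sp by simp
    have z: "z = 1 - complex_of_real R * cis psi" using s beta_at[OF s01] by (simp add: R_def psi_def)
    have "\<bar>2 * pi * s - pi\<bar> < pi" using s01 by (auto simp: abs_if)
    then have "\<bar>psi\<bar> < pi * (1 - a/2)" unfolding psi_def using assms
      by (simp add: abs_mult)
    moreover have "pi * (1 - a/2) \<le> pi" using assms by simp
    ultimately have pb: "\<bar>psi\<bar> < pi * (1 - a/2)" "\<bar>psi\<bar> \<le> pi" by linarith+
    have tz: "th z = \<bar>psi\<bar>" using th_polar[OF Rp pb(2)] z by simp
    have "psi / (2 - a) = pi * s - pi/2" unfolding psi_def using assms by (simp add: field_simps)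
    then have "cos (psi / (2 - a)) = sin (pi * s)" by (simp add: cos_diff)
    then have "HH a (th z) = R" using HH_formula(1)[OF assms pb(1)] tz by (simp add: R_def)
    moreover have "cmod (1 - z) = R" using z Rp by (simp add: norm_mult)
    moreover have "z \<noteq> 1" using z Rp by simp
    ultimately show ?thesis by simp
  qed
next
  fix z assume zin: "z \<in> insert 1 {z. z \<noteq> 1 \<and> cmod (1 - z) = HH a (th z)}"
  show "z \<in> path_image (beta_curve a)"
  proof (cases "z = 1")
    case True then show ?thesis using beta_0 unfolding path_image_def by force
  next
    case False
    then have eq: "cmod (1 - z) = HH a (th z)" using zin by auto
    define psi where "psi = Arg (1 - z)"
    have tz: "th z = \<bar>psi\<bar>" using polar_rep(2)[OF False] psi_def by simp
    have pb: "\<bar>psi\<bar> \<le> pi" using Arg_bounded[of "1 - z"] psi_def by auto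
    have "HH a \<bar>psi\<bar> > 0" using eq tz polar_rep(3)[OF False] by simp
    then have pl: "\<bar>psi\<bar> < pi * (1 - a/2)" using HH_pos_imp[OF assms _ pb] by simp
    define s where "s = (psi / (1 - a/2) + pi) / (2 * pi)"
    have q: "\<bar>psi / (1 - a/2)\<bar> < pi" using pl assms by (simp add: abs_divide field_simps)
    define q' where "q' = psi / (1 - a/2)"
    have "- pi < q'" "q' < pi" using q unfolding q'_def by linarith+
    then have s01: "0 < s" "s < 1" unfolding s_def q'_def[symmetric] by (auto simp: field_simps)
    have ps: "(2 * pi * s - pi) * (1 - a/2) = psi" unfolding s_def using assms by (simp add: field_simps)
    have "pi * s = psi / (2 - a) + pi/2" unfolding s_def using assms by (simp add: field_simps)
    then have "sin (pi * s) = cos (psi / (2 - a))" by (simp add: sin_add)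
    then have "(2 * sin (pi * s)) powr a = cmod (1 - z)"
      using HH_formula(1)[OF assms pl] eq tz by simp
    then have "beta_curve a s = z" using beta_at[OF s01] ps polar_rep(1)[OF False] psi_def by simp
    then show ?thesis using s01 unfolding path_image_def by force
  qed
qed


lemma cmod_polar:
  assumes "r > 0"
  shows "cmod (1 - (1 - complex_of_real r * cis p)) = r" "1 - complex_of_real r * cis p \<noteq> 1"
  using assms by (simp_all add: norm_mult)

lemma inside_decomp:
  fixes P S E :: "'a::real_normed_vector set"
  assumes "-P = S \<union> E" "S \<inter> E = {}" "open S" "open E" "connected S" "connected E"
    "bounded S" "\<not> bounded E"
  shows "inside P = S"
proof (rule set_eqI, rule iffI)
  fix x assume "x \<in> inside P"
  then have xP: "x \<notin> P" and bd: "bounded (connected_component_set (-P) x)"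
    unfolding inside_def by auto
  have "x \<notin> E"
  proof
    assume "x \<in> E"
    then have "E \<subseteq> connected_component_set (-P) x"
      using assms by (intro connected_component_maximal) auto
    then show False using bd assms(8) bounded_subset by blast
  qed
  then show "x \<in> S" using xP assms(1) by blast
next
  fix x assume xS: "x \<in> S"
  then have xP: "x \<notin> P" using assms(1) by blast
  let ?C = "connected_component_set (-P) x"
  have cC: "connected ?C" by (rule connected_connected_component)
  have "?C \<subseteq> -P" by (rule connected_component_subset)
  then have "?C \<subseteq> S \<union> E" using assms(1) by simp
  moreover have "x \<in> ?C" using xP by simp
  ultimately have "?C \<subseteq> S"
    using connectedD[OF cC assms(3) assms(4)] assms(2) xS by blast
  then have "bounded ?C" using assms(7) bounded_subset by blast
  then show "x \<in> inside P" using xP unfolding inside_def by auto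
qed

lemma th_cont: "continuous_on (-{1}) th"
proof -
  have "continuous_on (-{1}) (\<lambda>z. arccos (Re (1 - z) / cmod (1 - z)))"
  proof (rule continuous_on_arccos)
    show "continuous_on (- {1}) (\<lambda>z. Re (1 - z) / cmod (1 - z))"
      by (intro continuous_intros) auto
    show "\<forall>x\<in>- {1}. - 1 \<le> Re (1 - x) / cmod (1 - x) \<and> Re (1 - x) / cmod (1 - x) \<le> 1"
    proof
      fix x :: complex assume "x \<in> -{1}"
      then have p: "cmod (1 - x) > 0" by simp
      have "\<bar>Re (1 - x)\<bar> \<le> cmod (1 - x)" by (rule abs_Re_le_cmod)
      then show "- 1 \<le> Re (1 - x) / cmod (1 - x) \<and> Re (1 - x) / cmod (1 - x) \<le> 1"
        using p by (auto simp: field_simps abs_le_iff)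
    qed
  qed
  then show ?thesis unfolding th_def .
qed

lemma HHth_cont: assumes "0 < a" "a < 1" shows "continuous_on (-{1}) (\<lambda>z. HH a (th z))"
  using continuous_on_compose2[OF HH_cont[OF assms] th_cont] by auto

lemma open_SS: assumes "0 < a" "a < 1" shows "open (SS a)"
proof -
  have "SS a = (-{1}) \<inter> (\<lambda>z. cmod (1 - z) - HH a (th z)) -` {..<0}"
    unfolding SS_def by auto
  moreover have "open ((-{1}) \<inter> (\<lambda>z. cmod (1 - z) - HH a (th z)) -` {..<0})"
    by (intro continuous_open_preimage continuous_intros HHth_cont[OF assms])
  ultimately show ?thesis by simp
qed

lemma open_EE: assumes "0 < a" "a < 1" shows "open (EE a)"
proof -
  have "EE a = (-{1}) \<inter> (\<lambda>z. cmod (1 - z) - HH a (th z)) -` {0<..}"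
    unfolding EE_def by auto
  moreover have "open ((-{1}) \<inter> (\<lambda>z. cmod (1 - z) - HH a (th z)) -` {0<..})"
    by (intro continuous_open_preimage continuous_intros HHth_cont[OF assms])
  ultimately show ?thesis by simp
qed

lemma bounded_SS: assumes "0 < a" shows "bounded (SS a)"
  unfolding bounded_iff
proof (intro exI ballI)
  fix z assume "z \<in> SS a"
  then have "cmod (1 - z) \<le> 2 powr a" using HH_le[OF assms, of "th z"] unfolding SS_def by auto
  moreover have "cmod z \<le> 1 + cmod (1 - z)" using norm_triangle_ineq4[of 1 "1 - z"] by simp
  ultimately show "cmod z \<le> 1 + 2 powr a" by simp
qed

lemma unbounded_EE: assumes "0 < a" "a < 1" shows "\<not> bounded (EE a)"
proof
  assume "bounded (EE a)"
  then obtain B where B: "\<forall>z\<in>EE a. cmod z \<le> B" unfolding bounded_iff by auto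
  define x where "x = max 2 (B + 1)"
  have x: "x > 1" "x > B" unfolding x_def by auto
  have "th (complex_of_real x) = pi"
  proof -
    have e: "1 - complex_of_real x = complex_of_real (1 - x)" by simp
    have "Re (1 - complex_of_real x) / cmod (1 - complex_of_real x) = -1"
      unfolding e norm_of_real using x by (simp add: divide_eq_minus_1_iff)
    then show ?thesis unfolding th_def by simp
  qed
  then have "complex_of_real x \<in> EE a" using x HH_pi[OF assms] unfolding EE_def
    by (auto simp: norm_of_real)
  then show False using B x by (auto simp: norm_of_real)
qed


lemma connected_SS: assumes "0 < a" "a < 1" shows "connected (SS a)"
proof -
  define c where "c = pi * (1 - a/2)"
  define Phi where "Phi = (\<lambda>(p::real, m::real). 1 - complex_of_real (m * HH a \<bar>p\<bar>) * cis p)"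
  have cont: "continuous_on UNIV Phi"
  proof -
    have h: "continuous_on UNIV (\<lambda>x::real\<times>real. HH a \<bar>fst x\<bar>)"
    proof -
      have "continuous_on UNIV (\<lambda>x::real\<times>real. \<bar>fst x\<bar>)" by (intro continuous_intros)
      then show ?thesis
        using continuous_on_compose2[OF HH_cont[OF assms], of UNIV "\<lambda>x::real\<times>real. \<bar>fst x\<bar>"] by auto
    qed
    have "continuous_on UNIV (\<lambda>x::real\<times>real. 1 - complex_of_real (snd x * HH a \<bar>fst x\<bar>) * cis (fst x))"
      by (intro continuous_intros h)
    then show ?thesis unfolding Phi_def by (simp add: case_prod_beta)
  qed
  have "SS a = Phi ` ({-c<..<c} \<times> {0<..<1})"
  proof (rule set_eqI, rule iffI)
    fix z assume z: "z \<in> SS a"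
    then have z1: "z \<noteq> 1" and lt: "cmod (1 - z) < HH a (th z)" unfolding SS_def by auto
    define p where "p = Arg (1 - z)"
    have tz: "th z = \<bar>p\<bar>" using polar_rep(2)[OF z1] p_def by simp
    have pb: "\<bar>p\<bar> \<le> pi" using Arg_bounded[of "1 - z"] p_def by auto
    have "HH a \<bar>p\<bar> > 0" using lt polar_rep(3)[OF z1] unfolding tz by linarith
    then have pl: "\<bar>p\<bar> < c" using HH_pos_imp[OF assms _ pb] c_def by simp
    define m where "m = cmod (1 - z) / HH a \<bar>p\<bar>"
    have "m > 0" "m < 1" unfolding m_def using lt tz polar_rep(3)[OF z1] \<open>HH a \<bar>p\<bar> > 0\<close>
      by (auto simp: field_simps)
    moreover have "Phi (p, m) = z"
      unfolding Phi_def m_def using \<open>HH a \<bar>p\<bar> > 0\<close> polar_rep(1)[OF z1] p_def by simp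
    ultimately show "z \<in> Phi ` ({-c<..<c} \<times> {0<..<1})" using pl
      by (intro image_eqI[of _ _ "(p, m)"]) (auto simp: abs_less_iff)
  next
    fix z assume "z \<in> Phi ` ({-c<..<c} \<times> {0<..<1})"
    then obtain x where x: "x \<in> {-c<..<c} \<times> {0<..<1}" "z = Phi x" by auto
    obtain p m where "x = (p, m)" by (cases x)
    then have pm: "\<bar>p\<bar> < c" "0 < m" "m < 1" "z = Phi (p, m)" using x by (auto simp: abs_less_iff)
    have Hp: "HH a \<bar>p\<bar> > 0" using HH_formula(2)[OF assms, of p] pm c_def by simp
    have r: "m * HH a \<bar>p\<bar> > 0" using Hp pm by simp
    have "c \<le> pi" unfolding c_def using assms by simp
    then have pb: "\<bar>p\<bar> \<le> pi" using pm by linarith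
    have z: "z = 1 - complex_of_real (m * HH a \<bar>p\<bar>) * cis p" using pm Phi_def by simp
    have "th z = \<bar>p\<bar>" using th_polar[OF r pb] z by simp
    moreover have "cmod (1 - z) = m * HH a \<bar>p\<bar>" unfolding z by (rule cmod_polar(1)[OF r])
    moreover have "m * HH a \<bar>p\<bar> < HH a \<bar>p\<bar>" using Hp pm by simp
    moreover have "z \<noteq> 1" unfolding z by (rule cmod_polar(2)[OF r])
    ultimately show "z \<in> SS a" unfolding SS_def by simp
  qed
  moreover have "connected ({-c<..<c} \<times> {0<..<(1::real)})"
    by (intro connected_Times) auto
  ultimately show ?thesis
    using connected_continuous_image[OF continuous_on_subset[OF cont]] by auto
qed

lemma connected_EE: assumes "0 < a" "a < 1" shows "connected (EE a)"
proof -
  define Psi where "Psi = (\<lambda>(p::real, m::real). 1 - complex_of_real (HH a \<bar>p\<bar> + m) * cis p)"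
  have cont: "continuous_on UNIV Psi"
  proof -
    have h: "continuous_on UNIV (\<lambda>x::real\<times>real. HH a \<bar>fst x\<bar>)"
    proof -
      have "continuous_on UNIV (\<lambda>x::real\<times>real. \<bar>fst x\<bar>)" by (intro continuous_intros)
      then show ?thesis
        using continuous_on_compose2[OF HH_cont[OF assms], of UNIV "\<lambda>x::real\<times>real. \<bar>fst x\<bar>"] by auto
    qed
    have "continuous_on UNIV (\<lambda>x::real\<times>real. 1 - complex_of_real (HH a \<bar>fst x\<bar> + snd x) * cis (fst x))"
      by (intro continuous_intros h)
    then show ?thesis unfolding Psi_def by (simp add: case_prod_beta)
  qed
  have "EE a = Psi ` ({-pi..pi} \<times> {0<..})"
  proof (rule set_eqI, rule iffI)
    fix z assume z: "z \<in> EE a"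
    then have z1: "z \<noteq> 1" and gt: "cmod (1 - z) > HH a (th z)" unfolding EE_def by auto
    define p where "p = Arg (1 - z)"
    have tz: "th z = \<bar>p\<bar>" using polar_rep(2)[OF z1] p_def by simp
    have pb: "\<bar>p\<bar> \<le> pi" using Arg_bounded[of "1 - z"] p_def by auto
    define m where "m = cmod (1 - z) - HH a \<bar>p\<bar>"
    have "m > 0" unfolding m_def using gt tz by simp
    moreover have "Psi (p, m) = z"
      unfolding Psi_def m_def using polar_rep(1)[OF z1] p_def by simp
    ultimately show "z \<in> Psi ` ({-pi..pi} \<times> {0<..})" using pb
      by (intro image_eqI[of _ _ "(p, m)"]) (auto simp: abs_le_iff)
  next
    fix z assume "z \<in> Psi ` ({-pi..pi} \<times> {0<..})"
    then obtain x where x: "x \<in> {-pi..pi} \<times> {0<..}" "z = Psi x" by auto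
    obtain p m where "x = (p, m)" by (cases x)
    then have pm: "\<bar>p\<bar> \<le> pi" "0 < m" "z = Psi (p, m)" using x by (auto simp: abs_le_iff)
    have r: "HH a \<bar>p\<bar> + m > 0" using HH_nonneg[of a "\<bar>p\<bar>"] pm by simp
    have z: "z = 1 - complex_of_real (HH a \<bar>p\<bar> + m) * cis p" using pm Psi_def by simp
    have "th z = \<bar>p\<bar>" using th_polar[OF r pm(1)] z by simp
    moreover have "cmod (1 - z) = HH a \<bar>p\<bar> + m" unfolding z by (rule cmod_polar(1)[OF r])
    moreover have "z \<noteq> 1" unfolding z by (rule cmod_polar(2)[OF r])
    ultimately show "z \<in> EE a" unfolding EE_def using pm by simp
  qed
  moreover have "connected ({-pi..pi} \<times> ({0<..} :: real set))" by (intro connected_Times) auto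
  ultimately show ?thesis
    using connected_continuous_image[OF continuous_on_subset[OF cont]] by auto
qed

lemma Omega_eq: assumes "0 < a" "a < 1" shows "Omega a = SS a"
  unfolding Omega_def
proof (rule inside_decomp)
  show "- path_image (beta_curve a) = SS a \<union> EE a"
    unfolding path_image_beta[OF assms] SS_def EE_def by auto
  show "SS a \<inter> EE a = {}" unfolding SS_def EE_def by auto
qed (use assms open_SS open_EE connected_SS connected_EE bounded_SS unbounded_EE in auto)


lemma SS_real:
  assumes "0 < a" "a < 1"
  shows "complex_of_real x \<in> SS a \<longleftrightarrow> 1 - 2 powr a < x \<and> x < 1"
proof -
  have e: "1 - complex_of_real x = complex_of_real (1 - x)" by simp
  have cm: "cmod (1 - complex_of_real x) = \<bar>1 - x\<bar>" unfolding e norm_of_real ..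
  consider "x < 1" | "x = 1" | "x > 1" by linarith
  then show ?thesis
  proof cases
    case 1
    then have "th (complex_of_real x) = 0" unfolding th_def e norm_of_real by simp
    then show ?thesis using 1 cm by (auto simp: SS_def HH_0)
  next
    case 2 then show ?thesis unfolding SS_def by simp
  next
    case 3
    then have "Re (complex_of_real (1 - x)) / \<bar>1 - x\<bar> = -1" by (simp add: divide_eq_minus_1_iff)
    then have "th (complex_of_real x) = pi" unfolding th_def e norm_of_real by simp
    then show ?thesis using 3 HH_pi[OF assms] unfolding SS_def e norm_of_real by auto
  qed
qed



lemma re_div_bounds:
  assumes "u \<noteq> 0"
  shows "-1 \<le> Re u / cmod u" "Re u / cmod u \<le> 1"
proof -
  have p: "cmod u > 0" using assms by simp
  have "\<bar>Re u\<bar> \<le> cmod u" by (rule abs_Re_le_cmod)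
  then have "\<bar>Re u / cmod u\<bar> \<le> 1" using p by (simp add: abs_divide divide_le_eq)
  then show "-1 \<le> Re u / cmod u" "Re u / cmod u \<le> 1" by linarith+
qed

lemma th_bounds: "0 \<le> th z" "th z \<le> pi"
proof -
  show "0 \<le> th z"
  proof (cases "z = 1")
    case True then show ?thesis by (simp add: th_def)
  next
    case False then show ?thesis unfolding th_def using re_div_bounds[of "1 - z"] by (intro arccos_lbound) auto
  qed
  show "th z \<le> pi"
  proof (cases "z = 1")
    case True then show ?thesis by (simp add: th_def)
  next
    case False then show ?thesis unfolding th_def using re_div_bounds[of "1 - z"] by (intro arccos_ubound) auto
  qed
qed

lemma SS_vert:
  assumes "0 < a" "a < 1" "x < 1" "Complex x y \<in> SS a" "\<bar>y'\<bar> \<le> \<bar>y\<bar>"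
  shows "Complex x y' \<in> SS a"
proof -
  have e: "\<And>y. 1 - Complex x y = Complex (1 - x) (- y)" by (simp add: complex_eq_iff)
  have cm: "\<And>y. cmod (1 - Complex x y) = sqrt ((1 - x)^2 + y^2)" unfolding e by (simp add: cmod_def)
  have le: "cmod (1 - Complex x y') \<le> cmod (1 - Complex x y)"
    unfolding cm using assms(5) by (simp add: abs_le_square_iff)
  have nz: "\<And>w. 1 - Complex x w \<noteq> 0" using assms(3) by (simp add: complex_eq_iff)
  have pos: "cmod (1 - Complex x y') > 0" using nz by simp
  have pos2: "cmod (1 - Complex x y) > 0" using pos le by linarith
  have re: "\<And>w. Re (1 - Complex x w) = 1 - x" by simp
  have thw: "\<And>w. th (Complex x w) = arccos ((1 - x) / cmod (1 - Complex x w))" unfolding th_def re ..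
  have "(1 - x) / cmod (1 - Complex x y) \<le> (1 - x) / cmod (1 - Complex x y')"
  proof (rule divide_left_mono[OF le])
    show "0 \<le> 1 - x" using assms(3) by linarith
    show "0 < cmod (1 - Complex x y) * cmod (1 - Complex x y')" by (rule mult_pos_pos[OF pos2 pos])
  qed
  moreover have "-1 \<le> (1 - x) / cmod (1 - Complex x y)" using re_div_bounds(1)[OF nz[of y]] unfolding re .
  moreover have "(1 - x) / cmod (1 - Complex x y') \<le> 1" using re_div_bounds(2)[OF nz[of y']] unfolding re .
  ultimately have "arccos ((1 - x) / cmod (1 - Complex x y')) \<le> arccos ((1 - x) / cmod (1 - Complex x y))"
    by (intro arccos_le_arccos)
  then have thle: "th (Complex x y') \<le> th (Complex x y)" unfolding thw .
  have "HH a (th (Complex x y)) \<le> HH a (th (Complex x y'))"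
    using thle th_bounds by (intro HH_antimono assms(1,2))
  moreover have "cmod (1 - Complex x y) < HH a (th (Complex x y))" using assms(4) unfolding SS_def by auto
  moreover have "Complex x y' \<noteq> 1" using assms(3) by (simp add: complex_eq_iff)
  ultimately show ?thesis using le unfolding SS_def by auto
qed



lemma EE_real: assumes "0 < a" "a < 1" "x > 1" shows "complex_of_real x \<in> EE a"
proof -
  have e: "1 - complex_of_real x = complex_of_real (1 - x)" by simp
  have cm: "cmod (1 - complex_of_real x) = \<bar>1 - x\<bar>" unfolding e norm_of_real ..
  have "Re (complex_of_real (1 - x)) / \<bar>1 - x\<bar> = -1" using assms(3) by (simp add: divide_eq_minus_1_iff)
  then have "th (complex_of_real x) = pi" unfolding th_def e norm_of_real by simp
  then show ?thesis using assms cm HH_pi[OF assms(1,2)] unfolding EE_def by auto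
qed

lemma inside_gamma:
  assumes "0 < a" "a < 1" "sin (2*pi*real j/real N) \<noteq> 0"
  shows "inside (path_image (gamma_curve a N j)) =
           {p. Complex (fst p) (2 * sin (2*pi*real j/real N) * snd p) \<in> SS a}"
proof -
  define c where "c = sin (2*pi*real j/real N)"
  have c0: "c \<noteq> 0" using assms c_def by simp
  define T where "T = (\<lambda>z::complex. (Re z, Im z / (2 * c)))"
  define U where "U = (\<lambda>p::real\<times>real. Complex (fst p) (2 * c * snd p))"
  have TU: "\<And>X. T ` X = U -` X"
  proof (rule set_eqI, rule iffI)
    fix p X assume "p \<in> T ` X"
    then obtain z where "z \<in> X" "p = T z" by auto
    then show "p \<in> U -` X" using c0 by (simp add: T_def U_def)
  next
    fix p X assume "p \<in> U -` X"
    then have "U p \<in> X" by simp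
    moreover have "T (U p) = p" using c0 by (simp add: T_def U_def)
    ultimately show "p \<in> T ` X" by force
  qed
  have gT: "gamma_curve a N j = T \<circ> beta_curve a"
    by (rule ext) (simp add: gamma_curve_def beta_curve_def T_def c_def Let_def)
  have blT: "bounded_linear T"
  proof -
    have "bounded_linear (\<lambda>z::complex. Im z / (2 * c))"
      using bounded_linear_compose[OF bounded_linear_divide[of "2 * c"] bounded_linear_Im] by (simp add: o_def)
    then show ?thesis unfolding T_def by (intro bounded_linear_Pair bounded_linear_Re)
  qed
  have cT: "continuous_on UNIV T" using blT linear_continuous_on by blast
  have cU: "continuous_on UNIV U" unfolding U_def by (intro continuous_intros)
  have P: "path_image (gamma_curve a N j) = U -` path_image (beta_curve a)"
    unfolding gT path_image_compose TU ..
  have "inside (path_image (gamma_curve a N j)) = U -` SS a"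
  proof (rule inside_decomp)
    show "- path_image (gamma_curve a N j) = U -` SS a \<union> U -` EE a"
      unfolding P path_image_beta[OF assms(1,2)] SS_def EE_def by auto
    show "U -` SS a \<inter> U -` EE a = {}" unfolding SS_def EE_def by auto
    show "open (U -` SS a)" using continuous_open_preimage[OF cU open_UNIV open_SS[OF assms(1,2)]] by simp
    show "open (U -` EE a)" using continuous_open_preimage[OF cU open_UNIV open_EE[OF assms(1,2)]] by simp
    show "connected (U -` SS a)" unfolding TU[symmetric]
      by (rule connected_continuous_image[OF continuous_on_subset[OF cT] connected_SS[OF assms(1,2)]]) simp
    show "connected (U -` EE a)" unfolding TU[symmetric]
      by (rule connected_continuous_image[OF continuous_on_subset[OF cT] connected_EE[OF assms(1,2)]]) simp
    show "bounded (U -` SS a)" unfolding TU[symmetric]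
      by (rule bounded_linear_image[OF bounded_SS[OF assms(1)] blT])
    show "\<not> bounded (U -` EE a)"
    proof
      assume "bounded (U -` EE a)"
      then obtain B where B: "\<forall>p\<in>U -` EE a. norm p \<le> B" unfolding bounded_iff by auto
      define x where "x = max 2 (B + 1)"
      have "U (x, 0) = complex_of_real x" by (simp add: U_def complex_eq_iff)
      then have "(x, 0) \<in> U -` EE a" using EE_real[OF assms(1,2), of x] x_def by simp
      then have "norm (x, 0::real) \<le> B" using B by blast
      then show False unfolding x_def by (simp add: norm_Pair)
    qed
  qed
  then show ?thesis by (auto simp: U_def c_def)
qed



definition nxt :: "nat \<Rightarrow> nat \<Rightarrow> nat" where "nxt N i = (if i + 1 = N then 0 else i + 1)"
definition prv :: "nat \<Rightarrow> nat \<Rightarrow> nat" where "prv N i = (if i = 0 then N - 1 else i - 1)"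

lemma nxt_mod: "i < N \<Longrightarrow> (i + 1) mod N = nxt N i"
  unfolding nxt_def by (auto simp: mod_if)

lemma prv_iff: "i < N \<Longrightarrow> k < N \<Longrightarrow> (i = (k + 1) mod N) \<longleftrightarrow> k = prv N i"
  unfolding prv_def by (auto simp: mod_if)

lemma nxt_lt: "i < N \<Longrightarrow> nxt N i < N" unfolding nxt_def by auto
lemma prv_lt: "i < N \<Longrightarrow> prv N i < N" unfolding prv_def by auto
lemma prv_nxt: "i < N \<Longrightarrow> prv N (nxt N i) = i" unfolding prv_def nxt_def by auto
lemma nxt_prv: "i < N \<Longrightarrow> nxt N (prv N i) = i" unfolding prv_def nxt_def by auto

lemma cml_entry:
  assumes "N \<ge> 3" "i < N" "k < N"
  shows "cml_matrix N a0 a1 a2 i k =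
     (if k = i then a1 else 0) + (if k = nxt N i then a2 else 0) + (if k = prv N i then a0 else 0)"
proof -
  have d1: "nxt N i \<noteq> i" "prv N i \<noteq> i" "nxt N i \<noteq> prv N i"
    using assms unfolding nxt_def prv_def by auto
  show ?thesis unfolding cml_matrix_def using assms d1 nxt_mod[OF assms(2)] prv_iff[OF assms(2,3)]
    by auto
qed

lemma row_sum:
  assumes "N \<ge> 3" "i < N"
  shows "(\<Sum>k<N. complex_of_real (cml_matrix N a0 a1 a2 i k) * v k)
       = a1 * v i + a2 * v (nxt N i) + a0 * v (prv N i)"
proof -
  have "(\<Sum>k<N. complex_of_real (cml_matrix N a0 a1 a2 i k) * v k)
      = (\<Sum>k<N. (if k = i then a1 * v k else 0) + (if k = nxt N i then a2 * v k else 0)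
                  + (if k = prv N i then a0 * v k else 0))"
    by (rule sum.cong) (auto simp: cml_entry[OF assms(1,2)] distrib_right)
  also have "\<dots> = a1 * v i + a2 * v (nxt N i) + a0 * v (prv N i)"
    using assms nxt_lt[OF assms(2)] prv_lt[OF assms(2)]
    by (simp add: sum.distrib sum.delta')
  finally show ?thesis .
qed

lemma root_nxt:
  fixes q :: complex
  assumes "q ^ N = 1" "i < N"
  shows "q ^ (nxt N i * k) = q ^ k * q ^ (i * k)"
proof (cases "i + 1 = N")
  case True
  then have "k + i * k = N * k" by (metis add.commute add_mult_distrib mult_1 Suc_eq_plus1)
  then have "q ^ k * q ^ (i * k) = (q ^ N) ^ k" by (simp add: power_add[symmetric] power_mult[symmetric])
  then show ?thesis using True assms by (simp add: nxt_def)
next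
  case False
  then show ?thesis by (simp add: nxt_def power_add[symmetric] algebra_simps)
qed

lemma root_prv:
  fixes q :: complex
  assumes "q ^ N = 1" "i < N"
  shows "q ^ (prv N i * k) = inverse q ^ k * q ^ (i * k)"
proof -
  have q0: "q \<noteq> 0" using assms by (metis less_nat_zero_code power_0_left zero_neq_one)
  have p: "prv N i < N" using prv_lt[OF assms(2)] .
  have "q ^ (nxt N (prv N i) * k) = q ^ k * q ^ (prv N i * k)" by (rule root_nxt[OF assms(1) p])
  then have "q ^ (i * k) = q ^ k * q ^ (prv N i * k)" using nxt_prv[OF assms(2)] by simp
  then show ?thesis using q0 by (simp add: power_inverse field_simps)
qed

definition omg :: "nat \<Rightarrow> complex" where "omg N = cis (2 * pi / real N)"

lemma omg_pow: "omg N ^ m = cis (2 * pi * real m / real N)"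
  unfolding omg_def Complex.DeMoivre by (simp add: field_simps)

lemma omg_N: "N > 0 \<Longrightarrow> omg N ^ N = 1"
  unfolding omg_pow by simp

lemma omg_pow_ne1:
  assumes "0 < m" "m < N"
  shows "omg N ^ m \<noteq> 1"
proof
  assume "omg N ^ m = 1"
  then have "cos (2 * pi * real m / real N) = 1" unfolding omg_pow by (simp add: complex_eq_iff)
  then obtain n :: int where n: "2 * pi * real m / real N = of_int n * 2 * pi"
    using cos_one_2pi_int by blast
  then have "real m = of_int n * real N" using assms by (simp add: field_simps)
  then have "int m = n * int N" by (metis of_int_eq_iff of_int_mult of_int_of_nat_eq)
  moreover have "n \<le> 0 \<or> n \<ge> 1" by linarith
  moreover have "n \<le> 0 \<Longrightarrow> n * int N \<le> 0" by (simp add: mult_nonpos_nonneg)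
  moreover have "n \<ge> 1 \<Longrightarrow> n * int N \<ge> 1 * int N" by (intro mult_right_mono) auto
  ultimately have "int m \<le> 0 \<or> int m \<ge> int N" by auto
  then show False using assms by linarith
qed


definition lam :: "nat \<Rightarrow> real \<Rightarrow> real \<Rightarrow> nat \<Rightarrow> complex" where
  "lam N a1 a2 k = Complex a1 (2 * a2 * sin (2 * pi * real k / real N))"

lemma lam_alt:
  "complex_of_real a1 + complex_of_real a2 * omg N ^ k - complex_of_real a2 * inverse (omg N) ^ k = lam N a1 a2 k"
proof -
  have "inverse (omg N) ^ k = cis (- (2 * pi * real k / real N))"
    by (simp only: power_inverse omg_pow cis_inverse)
  then show ?thesis by (simp add: omg_pow lam_def complex_eq_iff)
qed

lemma sum_nxt:
  assumes "N > 0"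
  shows "(\<Sum>i<N. f (nxt N i) i) = (\<Sum>j<N. f j (prv N j))"
  by (rule sum.reindex_bij_witness[of _ "prv N" "nxt N"])
     (auto simp: prv_nxt nxt_prv nxt_lt prv_lt)

lemma sum_prv:
  assumes "N > 0"
  shows "(\<Sum>i<N. f (prv N i) i) = (\<Sum>j<N. f j (nxt N j))"
  by (rule sum.reindex_bij_witness[of _ "nxt N" "prv N"])
     (auto simp: prv_nxt nxt_prv nxt_lt prv_lt)

lemma eig_lam:
  assumes "N \<ge> 3"
  shows "is_eigenvalue N (cml_matrix N (-a2) a1 a2) (lam N a1 a2 k)"
proof -
  define w where "w = omg N"
  have wN: "w ^ N = 1" using omg_N assms w_def by simp
  define v where "v = (\<lambda>i. w ^ (i * k))"
  have "\<forall>i<N. (\<Sum>j<N. complex_of_real (cml_matrix N (-a2) a1 a2 i j) * v j) = lam N a1 a2 k * v i"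
  proof (intro allI impI)
    fix i assume i: "i < N"
    have "(\<Sum>j<N. complex_of_real (cml_matrix N (-a2) a1 a2 i j) * v j)
        = a1 * v i + a2 * v (nxt N i) + (- a2) * v (prv N i)"
      using row_sum[OF assms i] by simp
    also have "\<dots> = (a1 + a2 * w ^ k - a2 * inverse w ^ k) * v i"
      unfolding v_def root_nxt[OF wN i] root_prv[OF wN i] by (simp add: algebra_simps)
    also have "\<dots> = lam N a1 a2 k * v i" using lam_alt w_def by simp
    finally show "(\<Sum>j<N. complex_of_real (cml_matrix N (-a2) a1 a2 i j) * v j) = lam N a1 a2 k * v i" .
  qed
  moreover have "v 0 \<noteq> 0" unfolding v_def by simp
  moreover have "0 < N" using assms by simp
  ultimately show ?thesis unfolding is_eigenvalue_def by (intro exI[of _ v]) blast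
qed


lemma root_sum:
  fixes q :: complex
  assumes "q ^ N = 1" "q \<noteq> 1"
  shows "(\<Sum>k<N. q ^ k) = 0"
  using assms by (simp add: sum_gp_strict)

lemma eig_only:
  assumes "N \<ge> 3" "is_eigenvalue N (cml_matrix N (-a2) a1 a2) mu"
  shows "\<exists>k<N. mu = lam N a1 a2 k"
proof (rule ccontr)
  assume nk: "\<not> (\<exists>k<N. mu = lam N a1 a2 k)"
  have N0: "N > 0" using assms by simp
  obtain v where v: "\<exists>i<N. v i \<noteq> 0"
    and ev: "\<forall>i<N. (\<Sum>j<N. complex_of_real (cml_matrix N (-a2) a1 a2 i j) * v j) = mu * v i"
    using assms(2) unfolding is_eigenvalue_def by blast
  obtain i0 where i0: "i0 < N" "v i0 \<noteq> 0" using v by blast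
  define w where "w = omg N"
  define z where "z = inverse w"
  have wN: "w ^ N = 1" using omg_N N0 w_def by simp
  have w0: "w \<noteq> 0" using wN N0 by (metis power_0_left zero_neq_one less_irrefl)
  have zN: "z ^ N = 1" unfolding z_def power_inverse using wN by simp
  have iz: "inverse z = w" unfolding z_def by simp
  define c where "c = (\<lambda>k. \<Sum>i<N. v i * z ^ (i * k))"
  have c0: "c k = 0" if k: "k < N" for k
  proof -
    have "mu * c k = (\<Sum>i<N. (mu * v i) * z ^ (i * k))"
      unfolding c_def by (simp add: sum_distrib_left mult.assoc)
    also have "\<dots> = (\<Sum>i<N. (a1 * v i + a2 * v (nxt N i) + (- a2) * v (prv N i)) * z ^ (i * k))"
      by (rule sum.cong) (use ev row_sum[OF assms(1)] in auto)
    also have "\<dots> = a1 * c k + a2 * (\<Sum>i<N. v (nxt N i) * z ^ (i * k))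
                     - a2 * (\<Sum>i<N. v (prv N i) * z ^ (i * k))"
      unfolding c_def by (simp add: algebra_simps sum.distrib sum_distrib_left sum_subtractf)
    also have "(\<Sum>i<N. v (nxt N i) * z ^ (i * k)) = (\<Sum>j<N. v j * z ^ (prv N j * k))"
      using sum_nxt[OF N0, of "\<lambda>a b. v a * z ^ (b * k)"] by simp
    also have "\<dots> = w ^ k * c k"
      unfolding c_def sum_distrib_left
      by (rule sum.cong) (auto simp: root_prv[OF zN] iz)
    also have "(\<Sum>i<N. v (prv N i) * z ^ (i * k)) = (\<Sum>j<N. v j * z ^ (nxt N j * k))"
      using sum_prv[OF N0, of "\<lambda>a b. v a * z ^ (b * k)"] by simp
    also have "\<dots> = z ^ k * c k"
      unfolding c_def sum_distrib_left
      by (rule sum.cong) (auto simp: root_nxt[OF zN])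
    finally have "mu * c k = (a1 + a2 * w ^ k - a2 * inverse w ^ k) * c k"
      unfolding z_def by (simp add: algebra_simps)
    then have "mu * c k = lam N a1 a2 k * c k" using lam_alt w_def by simp
    moreover have "mu \<noteq> lam N a1 a2 k" using nk k by blast
    ultimately show "c k = 0" by simp
  qed
  have inner: "(\<Sum>k<N. (z ^ j * w ^ i0) ^ k) = (if j = i0 then of_nat N else 0)" if j: "j < N" for j
  proof (cases "j = i0")
    case True
    then have "z ^ j * w ^ i0 = 1" unfolding z_def power_inverse using w0 by simp
    then show ?thesis using True by simp
  next
    case False
    define q where "q = z ^ j * w ^ i0"
    have "(z ^ j) ^ N = 1" by (metis power_mult mult.commute zN power_one)
    moreover have "(w ^ i0) ^ N = 1" by (metis power_mult mult.commute wN power_one)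
    ultimately have qN: "q ^ N = 1" unfolding q_def by (simp add: power_mult_distrib)
    have "q \<noteq> 1"
    proof (cases "j < i0")
      case True
      then have "q = w ^ (i0 - j)" unfolding q_def z_def using w0
        by (simp add: power_diff power_inverse field_simps)
      then show ?thesis using omg_pow_ne1[of "i0 - j" N] True i0 w_def by simp
    next
      case False
      then have ji: "i0 < j" using \<open>j \<noteq> i0\<close> by simp
      then have "q = inverse (w ^ (j - i0))" unfolding q_def z_def using w0
        by (simp add: power_diff power_inverse field_simps)
      then show ?thesis using omg_pow_ne1[of "j - i0" N] ji j w_def by auto
    qed
    then show ?thesis using False root_sum[OF qN] q_def by simp
  qed
  have "(\<Sum>k<N. c k * w ^ (i0 * k)) = (\<Sum>j<N. v j * (\<Sum>k<N. (z ^ j * w ^ i0) ^ k))"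
    unfolding c_def sum_distrib_left sum_distrib_right
    by (subst sum.swap) (simp add: power_mult_distrib power_mult[symmetric] mult.commute mult.left_commute)
  also have "\<dots> = (\<Sum>j<N. v j * (if j = i0 then of_nat N else 0))"
    by (rule sum.cong) (auto simp: inner)
  also have "\<dots> = v i0 * of_nat N" using i0 by (simp add: if_distrib sum.delta' cong: if_cong)
  finally have "v i0 * of_nat N = 0" using c0 by simp
  then show False using i0 N0 by simp
qed



lemma abs_cos_shift:
  fixes m :: int
  shows "\<bar>cos (x + of_int m * pi)\<bar> = \<bar>cos x\<bar>"
proof -
  have s: "sin (of_int m * pi) = 0" using sin_times_pi_eq_0[of "of_int m"] by simp
  then have "(cos (of_int m * pi))^2 = 1" using sin_cos_squared_add[of "of_int m * pi"] by simp
  then have c: "\<bar>cos (of_int m * pi)\<bar> = 1" using power2_eq_1_iff by fastforce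
  show ?thesis by (simp add: cos_add s abs_mult c)
qed

lemma sin_abs_eq:
  fixes e m :: int
  assumes "N > 0" "4 * int k - int N = e + 2 * int N * m" "\<bar>e\<bar> \<le> int N"
  shows "\<bar>sin (2 * pi * real k / real N)\<bar> = cos (pi * real_of_int \<bar>e\<bar> / (2 * real N))"
proof -
  have r: "4 * real k - real N = real_of_int e + 2 * real N * real_of_int m"
    using arg_cong[OF assms(2), of real_of_int] by simp
  have "2 * pi * real k / real N = (pi * real_of_int e / (2 * real N) + of_int m * pi) + pi/2"
  proof -
    have "2 * pi * real k / real N = pi * (4 * real k - real N) / (2 * real N) + pi/2"
      using assms(1) by (simp add: field_simps)
    also have "\<dots> = pi * (real_of_int e + 2 * real N * real_of_int m) / (2 * real N) + pi/2" using r by simp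
    also have "\<dots> = (pi * real_of_int e / (2 * real N) + of_int m * pi) + pi/2"
      using assms(1) by (simp add: field_simps)
    finally show ?thesis .
  qed
  then have "\<bar>sin (2 * pi * real k / real N)\<bar> = \<bar>cos (pi * real_of_int e / (2 * real N))\<bar>"
    using abs_cos_shift by (simp add: sin_add)
  also have "\<dots> = \<bar>cos (pi * real_of_int \<bar>e\<bar> / (2 * real N))\<bar>"
    by (cases "e \<ge> 0") (simp_all add: abs_if)
  also have "\<dots> = cos (pi * real_of_int \<bar>e\<bar> / (2 * real N))"
  proof -
    have "real_of_int \<bar>e\<bar> \<le> real N" using assms(3) by linarith
    then have "pi * real_of_int \<bar>e\<bar> / (2 * real N) \<le> pi / 2" using assms(1)
      by (simp add: field_simps)
    moreover have "0 \<le> pi * real_of_int \<bar>e\<bar> / (2 * real N)" by simp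
    ultimately have "cos (pi * real_of_int \<bar>e\<bar> / (2 * real N)) \<ge> 0" by (intro cos_ge_zero) linarith+
    then show ?thesis by simp
  qed
  finally show ?thesis .
qed


lemma jstar_max:
  assumes N3: "N \<ge> 3"
    and js: "(odd N \<and> j = nat \<lceil>(real N - 1) / 4\<rceil>) \<or> (even N \<and> j = N div 4)"
  shows "j < N \<and> sin (2 * pi * real j / real N) > 0 \<and>
         (\<forall>k. \<bar>sin (2 * pi * real k / real N)\<bar> \<le> sin (2 * pi * real j / real N))"
proof -
  define q where "q = N div 4"
  define r where "r = N mod 4"
  have Nqr: "N = 4 * q + r" "r < 4" unfolding q_def r_def by auto
  obtain es :: int where es: "4 * int j - int N = es"
    and esc: "(r = 0 \<and> es = 0) \<or> (r = 1 \<and> es = -1) \<or> (r = 2 \<and> es = -2) \<or> (r = 3 \<and> es = 1)"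
  proof -
    consider "r = 0" | "r = 1" | "r = 2" | "r = 3" using Nqr by linarith
    then show ?thesis
    proof cases
      case 1
      then have "even N" using Nqr by presburger
      then have "j = q" using js q_def by auto
      then show ?thesis using that[of 0] 1 Nqr by auto
    next
      case 2
      then have o: "odd N" using Nqr by presburger
      have "(real N - 1) / 4 = real q" using Nqr 2 by simp
      then have "j = q" using js o by simp
      then show ?thesis using that[of "-1"] 2 Nqr by auto
    next
      case 3
      then have "even N" using Nqr by presburger
      then have "j = q" using js q_def by auto
      then show ?thesis using that[of "-2"] 3 Nqr by auto
    next
      case 4
      then have o: "odd N" using Nqr by presburger
      have "(real N - 1) / 4 = real q + 1/2" using Nqr 4 by simp
      then have "\<lceil>(real N - 1) / 4\<rceil> = int q + 1" by (intro ceiling_unique) auto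
      then have "j = q + 1" using js o by simp
      then show ?thesis using that[of 1] 4 Nqr by auto
    qed
  qed
  have N0: "N > 0" using N3 by simp
  have esb: "\<bar>es\<bar> \<le> 2" using esc by auto
  have j1: "j \<ge> 1" using es esb N3 by linarith
  have j2: "2 * j < N" using es esb N3 by linarith
  have sj: "sin (2 * pi * real j / real N) > 0"
  proof (rule sin_gt_zero)
    show "0 < 2 * pi * real j / real N" using j1 N0 by simp
    have "2 * real j < real N" using j2 by linarith
    then show "2 * pi * real j / real N < pi" using N0 by (simp add: field_simps)
  qed
  have sj_eq: "sin (2 * pi * real j / real N) = cos (pi * real_of_int \<bar>es\<bar> / (2 * real N))"
    using sin_abs_eq[OF N0, of j es 0] es esb N3 sj by simp
  have "\<bar>sin (2 * pi * real k / real N)\<bar> \<le> sin (2 * pi * real j / real N)" for k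
  proof -
    define R where "R = (4 * int k) mod (2 * int N)"
    define m where "m = (4 * int k) div (2 * int N)"
    define e where "e = R - int N"
    have R: "0 \<le> R" "R < 2 * int N" unfolding R_def using N0 by auto
    have dm: "4 * int k - int N = e + 2 * int N * m" unfolding e_def R_def m_def
      using div_mult_mod_eq[of "4 * int k" "2 * int N"] by (simp add: algebra_simps)
    have eb: "\<bar>e\<bar> \<le> int N" using R unfolding e_def by simp
    have R2: "2 dvd R" unfolding R_def by (subst dvd_mod_iff) auto
    have ge: "\<bar>es\<bar> \<le> \<bar>e\<bar>"
    proof -
      consider "r = 0" | "r = 1" | "r = 3" | "r = 2" using Nqr by linarith
      then show ?thesis
      proof cases
        case 1 then show ?thesis using esc by auto
      next
        case 2 then show ?thesis using esc Nqr R2 unfolding e_def by presburger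
      next
        case 3 then show ?thesis using esc Nqr R2 unfolding e_def by presburger
      next
        case 4
        have "4 dvd 2 * int N" using Nqr 4 by presburger
        then have "4 dvd R" unfolding R_def by (subst dvd_mod_iff) auto
        then show ?thesis using esc Nqr 4 unfolding e_def by presburger
      qed
    qed
    have "\<bar>sin (2 * pi * real k / real N)\<bar> = cos (pi * real_of_int \<bar>e\<bar> / (2 * real N))"
      by (rule sin_abs_eq[OF N0 dm eb])
    also have "\<dots> \<le> cos (pi * real_of_int \<bar>es\<bar> / (2 * real N))"
    proof (rule cos_monotone_0_pi_le)
      show "0 \<le> pi * real_of_int \<bar>es\<bar> / (2 * real N)" by simp
      have "real_of_int \<bar>es\<bar> \<le> real_of_int \<bar>e\<bar>" using ge by linarith
      then show "pi * real_of_int \<bar>es\<bar> / (2 * real N) \<le> pi * real_of_int \<bar>e\<bar> / (2 * real N)"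
        using N0 by (intro divide_right_mono mult_left_mono) auto
      have "real_of_int \<bar>e\<bar> \<le> real N" using eb by linarith
      then show "pi * real_of_int \<bar>e\<bar> / (2 * real N) \<le> pi" using N0 by (simp add: field_simps)
    qed
    finally show ?thesis using sj_eq by simp
  qed
  moreover have "j < N" using j2 by simp
  ultimately show ?thesis using sj by blast
qed



lemma cml1: "cml_matrix 1 (-a2) a1 a2 i k = a1" by (simp add: cml_matrix_def)
lemma cml2: "cml_matrix 2 (-a2) a1 a2 i k = (if i = k then a1 else 0)" by (simp add: cml_matrix_def)

lemma row12:
  assumes "N = 1 \<or> N = 2" "i < N"
  shows "(\<Sum>k<N. complex_of_real (cml_matrix N (-a2) a1 a2 i k) * v k) = a1 * v i"
proof (cases "N = 1")
  case True
  then have i0: "i = 0" using assms by simp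
  have "cml_matrix N (-a2) a1 a2 0 0 = a1" using True cml1 by simp
  then show ?thesis using True i0 by simp
next
  case False
  then have N2: "N = 2" using assms by simp
  have "(\<Sum>k<N. complex_of_real (cml_matrix N (-a2) a1 a2 i k) * v k)
      = (\<Sum>k<N. (if k = i then a1 * v k else 0))"
    unfolding N2 cml2 by (rule sum.cong) auto
  also have "\<dots> = a1 * v i" using assms by (simp add: sum.delta')
  finally show ?thesis .
qed

lemma eig12:
  assumes "N = 1 \<or> N = 2"
  shows "is_eigenvalue N (cml_matrix N (-a2) a1 a2) mu \<longleftrightarrow> mu = complex_of_real a1"
proof
  assume "is_eigenvalue N (cml_matrix N (-a2) a1 a2) mu"
  then obtain v i where vi: "i < N" "v i \<noteq> 0"
    "\<forall>i<N. (\<Sum>k<N. complex_of_real (cml_matrix N (-a2) a1 a2 i k) * v k) = mu * v i"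
    unfolding is_eigenvalue_def by blast
  then have "a1 * v i = mu * v i" using row12[OF assms vi(1), of a2 a1 v] by simp
  then show "mu = complex_of_real a1" using vi(2) by simp
next
  assume mu: "mu = complex_of_real a1"
  have "\<forall>i<N. (\<Sum>k<N. complex_of_real (cml_matrix N (-a2) a1 a2 i k) * (\<lambda>_. 1::complex) k) = mu * (\<lambda>_. 1) i"
  proof (intro allI impI)
    fix i assume "i < N"
    from row12[OF assms this, of a2 a1 "\<lambda>_. 1"]
    show "(\<Sum>k<N. complex_of_real (cml_matrix N (-a2) a1 a2 i k) * (\<lambda>_. 1::complex) k) = mu * (\<lambda>_. 1) i"
      using mu by simp
  qed
  moreover have "0 < N" using assms by auto
  ultimately show "is_eigenvalue N (cml_matrix N (-a2) a1 a2) mu"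
    unfolding is_eigenvalue_def by (intro exI[of _ "\<lambda>_. 1"]) auto
qed

lemma case_big:
  assumes a: "0 < \<alpha>" "\<alpha> < 1" and N3: "N \<ge> 3"
    and js: "(odd N \<and> j = nat \<lceil>(real N - 1) / 4\<rceil>) \<or> (even N \<and> j = N div 4)"
  shows "stable_region \<alpha> N = {(a1, a2). a1 < 1 \<and> (a1, a2) \<in> inside (path_image (gamma_curve \<alpha> N j))}"
proof -
  define sg where "sg = sin (2 * pi * real j / real N)"
  have jm: "j < N" "sg > 0" "\<And>k. \<bar>sin (2 * pi * real k / real N)\<bar> \<le> sg"
    using jstar_max[OF N3 js] sg_def by auto
  have ins: "(a1, a2) \<in> inside (path_image (gamma_curve \<alpha> N j)) \<longleftrightarrow> Complex a1 (2 * sg * a2) \<in> SS \<alpha>"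
    for a1 a2 using inside_gamma[OF a, of j N] jm(2) sg_def by auto
  have lamj: "lam N a1 a2 j = Complex a1 (2 * sg * a2)" for a1 a2
    by (simp add: lam_def sg_def)
  have lam0: "lam N a1 a2 0 = complex_of_real a1" for a1 a2
    by (simp add: lam_def complex_eq_iff)
  show ?thesis
  proof (rule set_eqI)
    fix p :: "real \<times> real"
    obtain a1 a2 where p: "p = (a1, a2)" by (cases p)
    have "(\<forall>mu. is_eigenvalue N (cml_matrix N (-a2) a1 a2) mu \<longrightarrow> mu \<in> SS \<alpha>)
          \<longleftrightarrow> a1 < 1 \<and> Complex a1 (2 * sg * a2) \<in> SS \<alpha>"
    proof
      assume H: "\<forall>mu. is_eigenvalue N (cml_matrix N (-a2) a1 a2) mu \<longrightarrow> mu \<in> SS \<alpha>"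
      have "complex_of_real a1 \<in> SS \<alpha>" using H eig_lam[OF N3, of a2 a1 0] lam0 by simp
      then have "a1 < 1" using SS_real[OF a] by simp
      moreover have "Complex a1 (2 * sg * a2) \<in> SS \<alpha>" using H eig_lam[OF N3, of a2 a1 j] lamj by simp
      ultimately show "a1 < 1 \<and> Complex a1 (2 * sg * a2) \<in> SS \<alpha>" by simp
    next
      assume H: "a1 < 1 \<and> Complex a1 (2 * sg * a2) \<in> SS \<alpha>"
      show "\<forall>mu. is_eigenvalue N (cml_matrix N (-a2) a1 a2) mu \<longrightarrow> mu \<in> SS \<alpha>"
      proof (intro allI impI)
        fix mu assume "is_eigenvalue N (cml_matrix N (-a2) a1 a2) mu"
        then obtain k where "k < N" "mu = lam N a1 a2 k" using eig_only[OF N3] by blast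
        then have mu: "mu = Complex a1 (2 * a2 * sin (2 * pi * real k / real N))" by (simp add: lam_def)
        have "\<bar>2 * a2 * sin (2 * pi * real k / real N)\<bar> \<le> \<bar>2 * sg * a2\<bar>"
        proof -
          have "\<bar>a2\<bar> * \<bar>sin (2 * pi * real k / real N)\<bar> \<le> \<bar>a2\<bar> * sg"
            using jm(3)[of k] by (intro mult_left_mono) auto
          then show ?thesis using jm(2) by (simp add: abs_mult mult.commute)
        qed
        then show "mu \<in> SS \<alpha>" unfolding mu using SS_vert[OF a] H by blast
      qed
    qed
    then show "p \<in> stable_region \<alpha> N \<longleftrightarrow>
               p \<in> {(a1, a2). a1 < 1 \<and> (a1, a2) \<in> inside (path_image (gamma_curve \<alpha> N j))}"
      unfolding p stable_region_def Omega_eq[OF a] using ins by simp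
  qed
qed

theorem theorem4:
  fixes \<alpha> :: real and N :: nat
  assumes "0 < \<alpha>" and "\<alpha> < 1"
  shows "(N = 1 \<or> N = 2 \<longrightarrow>
            stable_region \<alpha> N = {(a1, a2). 1 - 2 powr \<alpha> < a1 \<and> a1 < 1})
       \<and> (N \<ge> 3 \<and> odd N \<longrightarrow>
            stable_region \<alpha> N =
              {(a1, a2). a1 < 1 \<and> (a1, a2) \<in> inside (path_image
                 (gamma_curve \<alpha> N (nat \<lceil>(real N - 1) / 4\<rceil>)))})
       \<and> (N \<ge> 4 \<and> even N \<longrightarrow>
            stable_region \<alpha> N =
              {(a1, a2). a1 < 1 \<and> (a1, a2) \<in> inside (path_image
                 (gamma_curve \<alpha> N (N div 4)))})"
proof (intro conjI impI)
  assume N12: "N = 1 \<or> N = 2"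
  show "stable_region \<alpha> N = {(a1, a2). 1 - 2 powr \<alpha> < a1 \<and> a1 < 1}"
    unfolding stable_region_def Omega_eq[OF assms] eig12[OF N12]
    using SS_real[OF assms] by auto
next
  assume "N \<ge> 3 \<and> odd N"
  then show "stable_region \<alpha> N =
              {(a1, a2). a1 < 1 \<and> (a1, a2) \<in> inside (path_image
                 (gamma_curve \<alpha> N (nat \<lceil>(real N - 1) / 4\<rceil>)))}"
    using case_big[OF assms] by blast
next
  assume "N \<ge> 4 \<and> even N"
  then show "stable_region \<alpha> N =
              {(a1, a2). a1 < 1 \<and> (a1, a2) \<in> inside (path_image
                 (gamma_curve \<alpha> N (N div 4)))}"
    using case_big[OF assms] by auto
qed

end
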